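(* Let $n\ge3$, $\mathbf{A}=\{a_1,\dots,a_n\}$, and $\mathbf{S}_2^n=\{XY : X,Y\in\mathbf{A}^*\setminus\{\emptyset\},\ \overline{\nu}(X)=\overline{\nu}(Y)\}$. Define $$W=(a_{n-2}a_{n-1})(a_{n-3}a_{n-2})\cdots(a_1a_2)\; a_n\; a_{n-2}a_{n-3}\cdots a_2a_1a_2\cdots a_{n-3}a_{n-2}\; a_n,$$ i.e. the concatenation of the pairs $a_ia_{i+1}$ for $i=n-2,n-3,\dots,1$, followed by $a_n$, followed by the palindrome $a_{n-2}a_{n-3}\cdots a_2a_1a_2\cdots a_{n-3}a_{n-2}$ (which is just $a_1$ when $n=3$), followed by $a_n$. Then $|W|=4n-7$ and $W$ is a crucial word with respect to $\mathbf{S}_2^n$.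
   Context: A word over $\mathbf{A}$ is a finite sequence of letters; $\mathbf{A}^*$ is the set of all words; $|W|$ is the length of $W$. A subword is a block of consecutive letters. For a word $X$, $\overline{\nu}(X)=(\nu_1(X),\dots,\nu_n(X))$ where $\nu_i(X)$ is the number of occurrences of $a_i$ in $X$. For $\mathbf{S}\subseteq\mathbf{A}^*$, a word is free from $\mathbf{S}$ if none of its subwords belongs to $\mathbf{S}$. A word $X$ free from $\mathbf{S}$ is crucial with respect to $\mathbf{S}$ if for every letter $a\in\mathbf{A}$ the word $Xa$ contains a subword belonging to $\mathbf{S}$. *)

theory Defs
  imports Main "HOL-Library.Sublist"
begin

(* Letters a_1..a_n are represented by the naturals 1..n; words are lists. *)
definition alphabet :: "nat \<Rightarrow> nat set" where
  "alphabet n = {1..n}"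

definition parikh :: "nat \<Rightarrow> nat list \<Rightarrow> nat list" where
  "parikh n X = map (\<lambda>i. count_list X i) [1..<n+1]"

definition S2 :: "nat \<Rightarrow> nat list set" where
  "S2 n = {X @ Y | X Y. X \<noteq> [] \<and> Y \<noteq> [] \<and> set X \<subseteq> alphabet n \<and> set Y \<subseteq> alphabet n
                      \<and> parikh n X = parikh n Y}"

(* subword = block of consecutive letters: library 'sublist' *)
definition free_from :: "nat list set \<Rightarrow> nat list \<Rightarrow> bool" where
  "free_from S X \<longleftrightarrow> (\<forall>w. sublist w X \<longrightarrow> w \<notin> S)"

definition crucial :: "nat set \<Rightarrow> nat list set \<Rightarrow> nat list \<Rightarrow> bool" where
  "crucial A S X \<longleftrightarrow> set X \<subseteq> A \<and> free_from S X \<and> (\<forall>a\<in>A. \<not> free_from S (X @ [a]))"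

definition Wword :: "nat \<Rightarrow> nat list" where
  "Wword n = concat (map (\<lambda>i. [i, i+1]) (rev [1..<n-1])) @ [n]
             @ (rev [2..<n-1] @ [1] @ [2..<n-1]) @ [n]"

end

theory Submission
  imports Defs
begin

definition pairs :: "nat list \<Rightarrow> nat list" where
  "pairs xs = concat (map (\<lambda>i. [i, i+1]) xs)"

definition os :: "nat list \<Rightarrow> nat set" where
  "os xs = {a. odd (count_list xs a)}"

lemma length_pairs[simp]: "length (pairs xs) = 2 * length xs"
  by (induction xs) (auto simp: pairs_def)

lemma pairs_append[simp]: "pairs (xs @ ys) = pairs xs @ pairs ys"
  by (simp add: pairs_def)

lemma pairs_Cons[simp]: "pairs (x # xs) = [x, x+1] @ pairs xs"
  by (simp add: pairs_def)

lemma pairs_Nil[simp]: "pairs [] = []"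
  by (simp add: pairs_def)

lemma cnt_upt: "count_list [i..<j] a = (if i \<le> a \<and> a < j then 1 else 0)"
  by (induction j) auto

lemma cnt_pairs: "count_list (pairs (rev [i..<j])) a =
   (if i \<le> a \<and> a < j then 1 else 0) + (if i < a \<and> a \<le> j then 1 else 0)"
  by (induction j) (auto simp: pairs_def)

lemma upt_split: "i \<le> j \<Longrightarrow> j \<le> k \<Longrightarrow> [i..<k] = [i..<j] @ [j..<k]"
  by (metis le_Suc_ex upt_add_eq_append)

lemma W_eq: "Wword n = pairs (rev [1..<n-1]) @ [n] @ rev [2..<n-1] @ [1] @ [2..<n-1] @ [n]"
  by (simp add: Wword_def pairs_def)

lemma W_dec1: assumes "1 \<le> j" "j \<le> n-1"
  shows "Wword n = pairs (rev [j..<n-1]) @ pairs (rev [1..<j]) @ [n] @ rev [2..<n-1] @ [1] @ [2..<n-1] @ [n]"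
  using upt_split[of 1 j "n-1"] assms by (simp add: W_eq)

lemma W_dec2: assumes "2 \<le> j" "j \<le> n-1"
  shows "Wword n = (pairs (rev [j..<n-1]) @ [j-1]) @ [j] @ pairs (rev [1..<j-1]) @ [n] @ rev [2..<n-1] @ [1] @ [2..<n-1] @ [n]"
proof -
  have "1 \<le> j-1" using assms by simp
  then have e: "[1..<Suc (j-1)] = [1..<j-1] @ [j-1]" by (rule upt_Suc_append)
  have "Suc (j-1) = j" using assms by simp
  with e have "[1..<j] = [1..<j-1] @ [j-1]" by simp
  then show ?thesis using W_dec1[of j n] assms by simp
qed

lemma W_dec3: assumes "2 \<le> j" "j \<le> n-1"
  shows "Wword n = (pairs (rev [1..<n-1]) @ [n] @ rev [j..<n-1]) @ rev [2..<j] @ [1] @ [2..<n-1] @ [n]"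
  using upt_split[of 2 j "n-1"] assms by (simp add: W_eq)

lemma W_dec4: assumes "2 \<le> j" "j \<le> n-1"
  shows "Wword n = (pairs (rev [1..<n-1]) @ [n] @ rev [2..<n-1] @ [1] @ [2..<j]) @ [j..<n-1] @ [n]"
  using upt_split[of 2 j "n-1"] assms by (simp add: W_eq)

lemma os_append: "os (xs @ ys) = (os xs - os ys) \<union> (os ys - os xs)"
  by (auto simp: os_def)

lemma least_eq: "(a::nat) \<in> S \<Longrightarrow> (\<And>b. b \<in> S \<Longrightarrow> a \<le> b) \<Longrightarrow> (LEAST x. x \<in> S) = a"
  by (rule Least_equality) auto

lemma least_eq2: "(a::nat) \<in> S \<Longrightarrow> 2 \<le> a \<Longrightarrow> (\<And>b. b \<in> S \<Longrightarrow> 2 \<le> b \<Longrightarrow> a \<le> b) \<Longrightarrow> (LEAST x. 2 \<le> x \<and> x \<in> S) = a"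
  by (rule Least_equality) auto

definition dec :: "nat \<Rightarrow> nat set \<Rightarrow> nat" where
  "dec n S = (if n \<in> S then (if 1 \<in> S then 2*n-3 + (n-1 - (LEAST a. 2 \<le> a \<and> a \<in> S))
                              else 3*n-5 + ((LEAST a. a \<in> S) - 2))
     else if n-1 \<in> S then
       (if (LEAST a. a \<in> S) = n-1 then 4*n-7
        else if Suc (LEAST a. a \<in> S) \<in> S \<and> Suc (LEAST a. a \<in> S) \<noteq> n-1
             then 2*(n-2-(LEAST a. a \<in> S))+1 else 2*(n-1-(LEAST a. a \<in> S)))
     else if n-2 \<in> S then 1 else 0)"

lemma os_A: assumes "1 \<le> j" "j \<le> n-1"
  shows "os (pairs (rev [j..<n-1])) = (if j < n-1 then {j, n-1} else {})"
proof (intro set_eqI)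
  fix a
  define m where "m = n - 2"
  have n: "n = m + 2" using assms unfolding m_def by simp
  define i where "i = j - 1"
  have j: "j = i + 1" using assms unfolding i_def by simp
  have "i \<le> m" using assms n j by simp
  then show "a \<in> os (pairs (rev [j..<n-1])) \<longleftrightarrow> a \<in> (if j < n-1 then {j, n-1} else {})"
    unfolding os_def n j by (simp add: cnt_pairs)
qed

lemma os_C: assumes "2 \<le> j" "j \<le> n-1" "n \<ge> 3"
  shows "os (pairs (rev [1..<n-1]) @ [n] @ rev [j..<n-1]) = insert 1 {j..n}"
proof (intro set_eqI)
  fix a
  define m where "m = n - 3"
  have n: "n = m + 3" using assms unfolding m_def by simp
  define i where "i = j - 2"
  have j: "j = i + 2" using assms unfolding i_def by simp
  have "i \<le> m" using assms n j by simp
  then show "a \<in> os (pairs (rev [1..<n-1]) @ [n] @ rev [j..<n-1]) \<longleftrightarrow> a \<in> insert 1 {j..n}"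
    unfolding os_def n j by (cases "a = 1") (simp_all add: cnt_pairs cnt_upt)
qed

lemma os_D: assumes "2 \<le> j" "j \<le> n-1" "n \<ge> 3"
  shows "os (pairs (rev [1..<n-1]) @ [n] @ rev [2..<n-1] @ [1] @ [2..<j]) = {j..n}"
proof (intro set_eqI)
  fix a
  define m where "m = n - 3"
  have n: "n = m + 3" using assms unfolding m_def by simp
  define i where "i = j - 2"
  have j: "j = i + 2" using assms unfolding i_def by simp
  have "i \<le> m" using assms n j by simp
  then show "a \<in> os (pairs (rev [1..<n-1]) @ [n] @ rev [2..<n-1] @ [1] @ [2..<j]) \<longleftrightarrow> a \<in> {j..n}"
    unfolding os_def n j by (cases "a = 1") (simp_all add: cnt_pairs cnt_upt)
qed
lemma os_B: assumes "2 \<le> j" "j \<le> n-1" "n \<ge> 3"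
  shows "os (pairs (rev [j..<n-1]) @ [j-1]) = (if j < n-1 then {j-1, j, n-1} else {n-2})"
proof (intro set_eqI)
  fix a
  define m where "m = n - 3"
  have n: "n = m + 3" using assms unfolding m_def by simp
  define i where "i = j - 2"
  have j: "j = i + 2" using assms unfolding i_def by simp
  have "i \<le> m" using assms n j by simp
  then show "a \<in> os (pairs (rev [j..<n-1]) @ [j-1]) \<longleftrightarrow> a \<in> (if j < n-1 then {j-1, j, n-1} else {n-2})"
    unfolding os_def n j by (cases "a = 1") (simp_all add: cnt_pairs)
qed

lemma os_W: assumes "n \<ge> 3"
  shows "os (Wword n) = {n-1}"
proof (intro set_eqI)
  fix a
  define m where "m = n - 3"
  have n: "n = m + 3" using assms unfolding m_def by simp
  show "a \<in> os (Wword n) \<longleftrightarrow> a \<in> {n-1}"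
    unfolding os_def W_eq n by (cases "a = 1") (simp_all add: cnt_pairs cnt_upt)
qed

lemma dec_A: assumes "1 \<le> j" "j \<le> n-1" "n \<ge> 3"
  shows "dec n (if j < n-1 then {j, n-1} else {}) = 2*(n-1-j)"
proof (cases "j < n-1")
  case True
  let ?S = "{j, n-1}"
  have l: "(LEAST a. a \<in> ?S) = j" using True by (intro least_eq) auto
  have f1: "n \<notin> ?S" "n-1 \<in> ?S" "j \<noteq> n-1" "\<not> (Suc j \<in> ?S \<and> Suc j \<noteq> n-1)"
    using True by auto
  have "dec n ?S = 2*(n-1-j)" unfolding dec_def l using f1 by (simp only: if_False if_True simp_thms)
  then show ?thesis using True by simp
next
  case False
  have f1: "n \<notin> {}" "n-1 \<notin> {}" "n-2 \<notin> {}" by auto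
  have "dec n {} = 0" unfolding dec_def using f1 by (simp only: if_False)
  then show ?thesis using False assms by simp
qed

lemma dec_B: assumes "2 \<le> j" "j \<le> n-1" "n \<ge> 3"
  shows "dec n (if j < n-1 then {j-1, j, n-1} else {n-2}) = 2*(n-1-j)+1"
proof (cases "j < n-1")
  case True
  let ?S = "{j-1, j, n-1}"
  have l: "(LEAST a. a \<in> ?S) = j-1" using True by (intro least_eq) auto
  have f1: "n \<notin> ?S" "n-1 \<in> ?S" "j-1 \<noteq> n-1" "Suc (j-1) \<in> ?S \<and> Suc (j-1) \<noteq> n-1"
    using True assms by auto
  have "dec n ?S = 2*(n-2-(j-1))+1" unfolding dec_def l using f1 by (simp only: if_False if_True simp_thms)
  then show ?thesis using True assms by simp
next
  case False
  have f1: "n \<notin> {n-2}" "n-1 \<notin> {n-2}" "n-2 \<in> {n-2}" using assms by auto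
  have "dec n {n-2} = 1" unfolding dec_def using f1 by (simp only: if_False if_True)
  then show ?thesis using False assms by simp
qed

lemma dec_C: assumes "2 \<le> j" "j \<le> n-1" "n \<ge> 3"
  shows "dec n (insert 1 {j..n}) = 2*n-3 + (n-1-j)"
proof -
  have l: "(LEAST a. 2 \<le> a \<and> a \<in> insert 1 {j..n}) = j" using assms by (intro least_eq2) auto
  have f1: "n \<in> insert 1 {j..n}" "1 \<in> insert 1 {j..n}" using assms by auto
  show ?thesis unfolding dec_def l using f1 by (simp only: if_True)
qed

lemma dec_D: assumes "2 \<le> j" "j \<le> n-1" "n \<ge> 3"
  shows "dec n {j..n} = 3*n-5 + (j-2)"
proof -
  have l: "(LEAST a. a \<in> {j..n}) = j" using assms by (intro least_eq) auto
  have f1: "n \<in> {j..n}" "1 \<notin> {j..n}" using assms by auto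
  show ?thesis unfolding dec_def l using f1 by (simp only: if_True if_False)
qed

lemma dec_E: assumes "n \<ge> 3"
  shows "dec n {n-1} = 4*n-7"
proof -
  have l: "(LEAST a. a \<in> {n-1}) = n-1" using assms by (intro least_eq) auto
  have f1: "n \<notin> {n-1}" "n-1 \<in> {n-1}" using assms by auto
  show ?thesis unfolding dec_def l using f1 by (simp only: if_True if_False simp_thms)
qed

lemma take_pre: "W = A @ B \<Longrightarrow> k = length A \<Longrightarrow> take k W = A"
  by simp

lemma len_W: "n \<ge> 3 \<Longrightarrow> length (Wword n) = 4*n-7"
  by (simp add: W_eq)

lemma decode: assumes "n \<ge> 3" "k \<le> length (Wword n)"
  shows "dec n (os (take k (Wword n))) = k"
proof -
  have k: "k \<le> 4*n-7" using assms len_W by simp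
  consider (a) j where "1 \<le> j" "j \<le> n-1" "k = 2*(n-1-j)"
    | (b) j where "2 \<le> j" "j \<le> n-1" "k = 2*(n-1-j)+1"
    | (c) j where "2 \<le> j" "j \<le> n-1" "k = 2*n-3+(n-1-j)"
    | (d) j where "2 \<le> j" "j \<le> n-1" "k = 3*n-5+(j-2)"
    | (e) "k = 4*n-7"
  proof -
    consider "k \<le> 2*n-4" "even k" | "k \<le> 2*n-4" "odd k" | "2*n-3 \<le> k" "k \<le> 3*n-6"
      | "3*n-5 \<le> k" "k \<le> 4*n-8" | "k = 4*n-7" using k assms(1) by linarith
    then show ?thesis
    proof cases
      case 1
      then obtain t where t: "k = 2*t" by (auto elim: evenE)
      have "1 \<le> n-1-t" "n-1-t \<le> n-1" "k = 2*(n-1-(n-1-t))" using 1 t assms(1) by arith+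
      then show ?thesis by (rule that(1))
    next
      case 2
      then obtain t where t: "k = 2*t+1" by (auto elim: oddE)
      have "2 \<le> n-1-t" "n-1-t \<le> n-1" "k = 2*(n-1-(n-1-t))+1" using 2 t assms(1) by arith+
      then show ?thesis by (rule that(2))
    next
      case 3
      have "2 \<le> n-1-(k-(2*n-3))" "n-1-(k-(2*n-3)) \<le> n-1" "k = 2*n-3+(n-1-(n-1-(k-(2*n-3))))"
        using 3 assms(1) by arith+
      then show ?thesis by (rule that(3))
    next
      case 4
      have "2 \<le> k-(3*n-5)+2" "k-(3*n-5)+2 \<le> n-1" "k = 3*n-5+((k-(3*n-5)+2)-2)"
        using 4 assms(1) by arith+
      then show ?thesis by (rule that(4))
    next
      case 5
      then show ?thesis by (rule that(5))
    qed
  qed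
  then show ?thesis
  proof cases
    case (a j)
    have "take k (Wword n) = pairs (rev [j..<n-1])"
      using W_dec1[OF a(1,2)] a(3) by (metis append_eq_conv_conj length_pairs length_rev length_upt)
    then show ?thesis using os_A[OF a(1,2)] dec_A[OF a(1,2) assms(1)] a(3) by simp
  next
    case (b j)
    have "take k (Wword n) = pairs (rev [j..<n-1]) @ [j-1]"
      using W_dec2[OF b(1,2)] b by (simp add: append_eq_conv_conj)
    then show ?thesis using os_B[OF b(1,2) assms(1)] dec_B[OF b(1,2) assms(1)] b(3) by simp
  next
    case (c j)
    have "take k (Wword n) = pairs (rev [1..<n-1]) @ [n] @ rev [j..<n-1]"
      using c(1,2,3) by (intro take_pre[OF W_dec3[OF c(1,2)]]) simp
    then show ?thesis using os_C[OF c(1,2) assms(1)] dec_C[OF c(1,2) assms(1)] c(3) by simp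
  next
    case (d j)
    have "take k (Wword n) = pairs (rev [1..<n-1]) @ [n] @ rev [2..<n-1] @ [1] @ [2..<j]"
      using d(1,2,3) by (intro take_pre[OF W_dec4[OF d(1,2)]]) simp
    then show ?thesis using os_D[OF d(1,2) assms(1)] dec_D[OF d(1,2) assms(1)] d(3) by simp
  next
    case e
    then show ?thesis using os_W[OF assms(1)] dec_E[OF assms(1)] len_W[OF assms(1)] by simp
  qed
qed

lemma set_pairs: "set (pairs (rev [i..<j])) \<subseteq> {i..j}"
  by (induction j) (auto simp: pairs_def)

lemma set_W: assumes "n \<ge> 3" shows "set (Wword n) \<subseteq> alphabet n"
proof -
  have "{1..n-1} \<subseteq> {1..(n::nat)}" by auto
  then have "set (pairs (rev [1..<n-1])) \<subseteq> {1..n}" using set_pairs[of 1 "n-1"] by (rule_tac subset_trans) auto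
  then show ?thesis unfolding W_eq alphabet_def using assms by auto
qed

lemma S2_os: assumes "w \<in> S2 n" shows "os w = {}" "w \<noteq> []"
proof -
  obtain X Y where w: "w = X @ Y" "X \<noteq> []" "Y \<noteq> []" "set X \<subseteq> alphabet n" "set Y \<subseteq> alphabet n"
    "parikh n X = parikh n Y" using assms unfolding S2_def by blast
  have "count_list X a = count_list Y a" for a
  proof (cases "a \<in> {1..n}")
    case True
    then have "a \<in> set [1..<n+1]" by auto
    then show ?thesis using w(6) unfolding parikh_def map_eq_conv by blast
  next
    case False
    then have "a \<notin> set X" "a \<notin> set Y" using w(4,5) unfolding alphabet_def by auto
    then show ?thesis by simp
  qed
  then show "os w = {}" unfolding os_def w(1) by auto
  show "w \<noteq> []" using w by simp
qed

lemma free_W: assumes "n \<ge> 3" shows "free_from (S2 n) (Wword n)"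
  unfolding free_from_def
proof (intro allI impI notI)
  fix w assume sw: "sublist w (Wword n)" and wS: "w \<in> S2 n"
  obtain u v where W: "Wword n = u @ w @ v" using sw unfolding sublist_def by blast
  have t1: "take (length u) (Wword n) = u" using W by simp
  have t2: "take (length u + length w) (Wword n) = u @ w" using W by simp
  have l1: "length u \<le> length (Wword n)" "length u + length w \<le> length (Wword n)" using W by auto
  have "os (u @ w) = os u" using S2_os(1)[OF wS] by (simp add: os_append)
  then have "length u = length u + length w"
    using decode[OF assms l1(1)] decode[OF assms l1(2)] t1 t2 by simp
  then show False using S2_os(2)[OF wS] by simp
qed

lemma parikh_eqI: "(\<And>b. count_list X b = count_list Y b) \<Longrightarrow> parikh n X = parikh n Y"
  unfolding parikh_def by simp

lemma notfree: assumes "W @ [a] = pre @ (X @ Y) @ suf" "X \<noteq> []" "Y \<noteq> []"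
  "set X \<subseteq> alphabet n" "set Y \<subseteq> alphabet n" "\<And>b. count_list X b = count_list Y b"
  shows "\<not> free_from (S2 n) (W @ [a])"
proof -
  have "X @ Y \<in> S2 n" unfolding S2_def using assms parikh_eqI[of X Y n] by blast
  moreover have "sublist (X @ Y) (W @ [a])" unfolding sublist_def using assms(1) by blast
  ultimately show ?thesis unfolding free_from_def by blast
qed

lemma cnt_mid: assumes "2 \<le> k" "k \<le> n-1" "n \<ge> 3"
  shows "count_list (pairs (rev [1..<k]) @ [n] @ rev [k..<n-1]) b
       = count_list (rev [2..<k] @ [1] @ [2..<n-1] @ [n] @ [k]) b"
proof -
  define m where "m = n - 3"
  have n: "n = m + 3" using assms unfolding m_def by simp
  define i where "i = k - 2"
  have k: "k = i + 2" using assms unfolding i_def by simp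
  have "i \<le> m" using assms n k by simp
  then show ?thesis unfolding n k by (cases "b = 1") (simp_all add: cnt_pairs cnt_upt)
qed

lemma crucial_letter: assumes "n \<ge> 3" "a \<in> alphabet n"
  shows "\<not> free_from (S2 n) (Wword n @ [a])"
proof -
  have a: "1 \<le> a" "a \<le> n" using assms(2) unfolding alphabet_def by auto
  have sP: "set (pairs (rev [i..<n-1])) \<subseteq> alphabet n" if "1 \<le> i" for i
  proof -
    have "{i..n-1} \<subseteq> alphabet n" using that unfolding alphabet_def by auto
    then show ?thesis using set_pairs[of i "n-1"] by (rule_tac subset_trans) auto
  qed
  consider "a = n" | "a = 1" | "2 \<le> a" "a \<le> n-1" using a by linarith
  then show ?thesis
  proof cases
    case 1
    show ?thesis
      by (rule notfree[where pre = "pairs (rev [1..<n-1]) @ [n] @ rev [2..<n-1] @ [1] @ [2..<n-1]"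
            and X = "[n]" and Y = "[n]" and suf = "[]"])
         (use 1 assms in \<open>auto simp: W_eq alphabet_def\<close>)
  next
    case 2
    show ?thesis
      by (rule notfree[where pre = "pairs (rev [1..<n-1])"
            and X = "[n] @ rev [2..<n-1] @ [1]" and Y = "[2..<n-1] @ [n] @ [1]" and suf = "[]"])
         (use 2 assms in \<open>auto simp: W_eq alphabet_def\<close>)
  next
    case 3
    have e: "rev [2..<n-1] = rev [a..<n-1] @ rev [2..<a]" using upt_split[of 2 a "n-1"] 3 by simp
    have W: "Wword n @ [a] = pairs (rev [a..<n-1]) @ ((pairs (rev [1..<a]) @ [n] @ rev [a..<n-1])
             @ (rev [2..<a] @ [1] @ [2..<n-1] @ [n] @ [a])) @ []"
      using W_dec1[of a n] 3 e by simp
    have sX: "set (pairs (rev [1..<a]) @ [n] @ rev [a..<n-1]) \<subseteq> alphabet n"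
    proof -
      have "{1..a} \<subseteq> alphabet n" using a unfolding alphabet_def by auto
      then have "set (pairs (rev [1..<a])) \<subseteq> alphabet n" using set_pairs[of 1 a] by (rule_tac subset_trans) auto
      then show ?thesis using 3 assms unfolding alphabet_def by auto
    qed
    show ?thesis
      by (rule notfree[OF W]) (use 3 assms sX cnt_mid[OF 3 assms(1)] in \<open>auto simp: alphabet_def\<close>)
  qed
qed

theorem mainTheorem5:
  fixes n :: nat
  assumes "n \<ge> 3"
  shows "length (Wword n) = 4 * n - 7 \<and> crucial (alphabet n) (S2 n) (Wword n)"
  using len_W[OF assms] set_W[OF assms] free_W[OF assms] crucial_letter[OF assms]
  unfolding crucial_def by blast

end
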